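(* Let $(x,y,s)\in\mathcal{N}(\theta)$ with $\theta\in\left(0,\ \min\left\{\frac{1}{3\sqrt n},\ \frac{1}{4\|QVV^T\|_F+1}\right\}\right)$, and let $\mu=x^Ts/n$, $\omega=\max_i\{x_i,s_i\}$ and $M=[\,SV+XQV\ \ -XA^T\,]$. Then the condition number of $M$ satisfies $$\kappa_M=\mathcal{O}\left(\frac{\omega^2+\mu\,\sigma_{\max}(Q)}{\mu}\,\kappa_{VAQ}\right),$$ where $\kappa_{VAQ}$ is the condition number of the matrix $\begin{bmatrix}V^T&0\\0&A\end{bmatrix}\begin{bmatrix}I&-Q\\0&I\end{bmatrix}$.
   Context: Given $b\in\mathbb{R}^m$, $c\in\mathbb{R}^n$, $A\in\mathbb{R}^{m\times n}$ with $\mathrm{rank}(A)=m\le n$ and symmetric positive semidefinite $Q\in\mathbb{R}^{n\times n}$ (data of the LCQO problem $\min c^Tx+\frac12x^TQx$ s.t. $Ax=b$, $x\ge0$, with dual constraints $A^Ty+s-Qx=c$, $s\ge0$). Partition $A=[A_B\ \ A_N]$ with $A_B$ a nonsingular $m\times m$ basis and set $V=\begin{bmatrix}A_B^{-1}A_N\\-I\end{bmatrix}\in\mathbb{R}^{n\times(n-m)}$, so $AV=0$. $X=\mathrm{diag}(x)$, $S=\mathrm{diag}(s)$, $e$ is the all-ones vector. $\mathcal{PD}^0=\{(x,y,s): Ax=b,\ A^Ty+s-Qx=c,\ x>0,\ s>0\}$ and $\mathcal{N}(\theta)=\{(x,y,s)\in\mathcal{PD}^0:\|XSe-\mu e\|_2\le\theta\mu\}$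 with $\mu=x^Ts/n$. Condition number means ratio of largest to smallest singular value; $\sigma_{\max}(Q)$ is the largest singular value of $Q$. The $\mathcal{O}$ hides an absolute constant. *)

theory Defs
  imports "Jordan_Normal_Form.Matrix" "Jordan_Normal_Form.Char_Poly" "Jordan_Normal_Form.DL_Rank"
begin

definition diag_vec :: "real vec \<Rightarrow> real mat" where
  "diag_vec v = mat (dim_vec v) (dim_vec v) (\<lambda>(i,j). if i = j then v $ i else 0)"

definition mat_inv :: "real mat \<Rightarrow> real mat" where
  "mat_inv B = (SOME C. C \<in> carrier_mat (dim_row B) (dim_row B) \<and> C * B = 1\<^sub>m (dim_row B)
                          \<and> B * C = 1\<^sub>m (dim_row B))"

definition basis_part :: "real mat \<Rightarrow> real mat" where
  "basis_part A = mat (dim_row A) (dim_row A) (\<lambda>(i,j). A $$ (i,j))"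

definition nonbasis_part :: "real mat \<Rightarrow> real mat" where
  "nonbasis_part A = mat (dim_row A) (dim_col A - dim_row A) (\<lambda>(i,j). A $$ (i, dim_row A + j))"

(* V = [A_B^{-1} A_N ; -I]  (n x (n-m)) *)
definition null_basis :: "real mat \<Rightarrow> real mat" where
  "null_basis A = (let m = dim_row A; n = dim_col A in
     four_block_mat (mat_inv (basis_part A) * nonbasis_part A) (0\<^sub>m m 0)
                    (- 1\<^sub>m (n - m)) (0\<^sub>m (n - m) 0))"

(* Singular values: square roots of the eigenvalues of B^T B (if B is tall or square)
   resp. of B B^T (if B is wide); i.e. the min(p,q) singular values of a p x q matrix. *)
definition gram_mat :: "real mat \<Rightarrow> real mat" where
  "gram_mat B = (if dim_col B \<le> dim_row B then transpose_mat B * B else B * transpose_mat B)"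

definition singular_values :: "real mat \<Rightarrow> real set" where
  "singular_values B = {sqrt k | k. eigenvalue (gram_mat B) k}"

definition sigma_max :: "real mat \<Rightarrow> real" where
  "sigma_max B = Max (singular_values B)"

definition sigma_min :: "real mat \<Rightarrow> real" where
  "sigma_min B = Min (singular_values B)"

definition cond_num :: "real mat \<Rightarrow> real" where
  "cond_num B = sigma_max B / sigma_min B"

definition frob_norm :: "real mat \<Rightarrow> real" where
  "frob_norm B = sqrt (\<Sum>i<dim_row B. \<Sum>j<dim_col B. (B $$ (i,j))^2)"

definition vnorm2 :: "real vec \<Rightarrow> real" where
  "vnorm2 v = sqrt (\<Sum>i<dim_vec v. (v $ i)^2)"

definition psd :: "real mat \<Rightarrow> bool" where
  "psd Q \<longleftrightarrow> Q \<in> carrier_mat (dim_row Q) (dim_row Q) \<and> transpose_mat Q = Q \<and>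
     (\<forall>v \<in> carrier_vec (dim_row Q). v \<bullet> (Q *\<^sub>v v) \<ge> 0)"

definition neighbourhood ::
  "real mat \<Rightarrow> real vec \<Rightarrow> real vec \<Rightarrow> real mat \<Rightarrow> real \<Rightarrow> real vec \<Rightarrow> real vec \<Rightarrow> real vec \<Rightarrow> bool" where
  "neighbourhood A b c Q \<theta> x y s \<longleftrightarrow>
     (let n = dim_col A; \<mu> = (x \<bullet> s) / real n in
      x \<in> carrier_vec n \<and> s \<in> carrier_vec n \<and> y \<in> carrier_vec (dim_row A) \<and>
      A *\<^sub>v x = b \<and> transpose_mat A *\<^sub>v y + s - Q *\<^sub>v x = c \<and>
      (\<forall>i<n. x $ i > 0) \<and> (\<forall>i<n. s $ i > 0) \<and>
      vnorm2 (vec n (\<lambda>i. x $ i * s $ i - \<mu>)) \<le> \<theta> * \<mu>)"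

end

theory Submission
  imports Defs "HOL-Analysis.Function_Topology"
begin

lemma qform_expand:
  fixes g :: "nat \<Rightarrow> nat \<Rightarrow> real"
  assumes sym: "\<And>i j. i<n \<Longrightarrow> j<n \<Longrightarrow> g i j = g j i"
  shows "(\<Sum>i<n. \<Sum>j<n. (f i + t * u i) * g i j * (f j + t * u j)) =
    (\<Sum>i<n. \<Sum>j<n. f i * g i j * f j) + 2 * t * (\<Sum>i<n. u i * (\<Sum>j<n. g i j * f j))
    + t^2 * (\<Sum>i<n. \<Sum>j<n. u i * g i j * u j)"
proof -
  have e: "(f i + t * u i) * g i j * (f j + t * u j) =
     f i * g i j * f j + t * (u i * g i j * f j) + t * (f i * g i j * u j) + t^2 * (u i * g i j * u j)" for i j
    by (simp add: algebra_simps power2_eq_square)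
  have sw: "(\<Sum>i<n. \<Sum>j<n. f i * g i j * u j) = (\<Sum>i<n. \<Sum>j<n. u i * g i j * f j)"
    apply (subst sum.swap)
    apply (rule sum.cong, simp, rule sum.cong, simp)
    using sym by (auto simp: mult.commute)
  have "(\<Sum>i<n. \<Sum>j<n. (f i + t * u i) * g i j * (f j + t * u j)) =
     (\<Sum>i<n. \<Sum>j<n. f i * g i j * f j) + t * (\<Sum>i<n. \<Sum>j<n. u i * g i j * f j)
      + t * (\<Sum>i<n. \<Sum>j<n. f i * g i j * u j) + t^2 * (\<Sum>i<n. \<Sum>j<n. u i * g i j * u j)"
    unfolding e by (simp add: sum.distrib sum_distrib_left)
  also have "(\<Sum>i<n. \<Sum>j<n. u i * g i j * f j) = (\<Sum>i<n. u i * (\<Sum>j<n. g i j * f j))"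
    by (simp add: sum_distrib_left mult.assoc)
  finally show ?thesis unfolding sw 
    by (simp add: sum_distrib_left mult.assoc)
qed

lemma lin_quad_nonpos:
  fixes U a :: real
  assumes "\<And>t. 2 * t * U + t^2 * a \<le> 0" "U \<ge> 0"
  shows "U = 0"
proof (rule ccontr)
  assume "U \<noteq> 0" hence U: "U > 0" using assms(2) by auto
  define t where "t = U / (\<bar>a\<bar> + 1)"
  have t: "t > 0" using U by (simp add: t_def)
  have "t * \<bar>a\<bar> < U" using U unfolding t_def
    by (simp add: field_simps)
  hence l1: "t * (t * \<bar>a\<bar>) < t * U" using t by simp
  have "t^2 * a \<ge> t^2 * (- \<bar>a\<bar>)"
    by (rule mult_left_mono) auto
  hence l2: "t^2 * a \<ge> - (t * (t * \<bar>a\<bar>))" by (simp add: power2_eq_square)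
  have l3: "t * U > 0" using t U by simp
  have "2 * t * U + t^2 * a > 0" using l1 l2 l3 by linarith
  with assms(1)[of t] show False by simp
qed

lemma PiE_lessThan_UNIV:
  "PiE {..<n} S = PiE UNIV (\<lambda>i. if i < n then S i else {undefined})"
  by (auto simp: PiE_iff extensional_def split: if_splits)

lemma rayleigh_max_fun:
  fixes g :: "nat \<Rightarrow> nat \<Rightarrow> real" and n :: nat
  assumes n: "0 < n" and sym: "\<And>i j. i<n \<Longrightarrow> j<n \<Longrightarrow> g i j = g j i"
  shows "\<exists>f lam. (\<Sum>i<n. (f i)^2) = 1 \<and> (\<forall>i<n. (\<Sum>j<n. g i j * f j) = lam * f i) \<and>
     (\<forall>h. (\<Sum>i<n. \<Sum>j<n. h i * g i j * h j) \<le> lam * (\<Sum>i<n. (h i)^2))"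
proof -
  define q where "q h = (\<Sum>i<n. \<Sum>j<n. h i * g i j * h j)" for h :: "nat \<Rightarrow> real"
  define N where "N h = (\<Sum>i<n. (h i)^2)" for h :: "nat \<Rightarrow> real"
  define K where "K = PiE {..<n} (\<lambda>_. {-1..1::real}) \<inter> {h. N h = 1}"
  have cP: "compact (PiE {..<n} (\<lambda>_. {-1..1::real}))"
    unfolding PiE_lessThan_UNIV compactin_euclidean_iff[symmetric] euclidean_product_topology[symmetric]
    by (subst compactin_PiE) auto
  have contN: "continuous_on UNIV N" unfolding N_def
    by (intro continuous_intros continuous_on_product_coordinates)
  have "closed {h. N h = 1}" by (rule closed_Collect_eq[OF contN]) auto
  hence cK: "compact K" unfolding K_def using cP compact_Int_closed by blast
  define e0 where "e0 = (\<lambda>i::nat. if i < n then (if i = 0 then 1 else 0) else (undefined::real))"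
  have "N e0 = 1"
  proof -
    have "N e0 = (\<Sum>i<n. if i = 0 then 1 else 0)" unfolding N_def e0_def
      by (rule sum.cong) auto
    also have "\<dots> = 1" using n by (subst sum.delta) auto
    finally show ?thesis .
  qed
  hence "e0 \<in> K" unfolding K_def e0_def by (auto simp: PiE_iff extensional_def split: if_splits)
  hence Kne: "K \<noteq> {}" by auto
  have coord: "continuous_on K (\<lambda>x. x i)" for i :: nat
    by (rule continuous_on_subset[OF continuous_on_product_coordinates]) simp
  have contq: "continuous_on K q" unfolding q_def
    by (intro continuous_on_sum continuous_on_mult continuous_on_const coord)
  obtain f where fK: "f \<in> K" and fmax: "\<And>y. y \<in> K \<Longrightarrow> q y \<le> q f"
    using continuous_attains_sup[OF cK Kne contq] by blast
  have Nf: "N f = 1" using fK unfolding K_def by auto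
  define lam where "lam = q f"
  have hom: "q h \<le> lam * N h" for h
  proof (cases "N h = 0")
    case True
    hence "\<forall>i<n. h i = 0" unfolding N_def by (simp add: sum_nonneg_eq_0_iff)
    hence "q h = 0" unfolding q_def by simp
    thus ?thesis using True by simp
  next
    case False
    have Npos: "N h > 0" using False unfolding N_def by (metis sum_nonneg zero_le_power2 order_le_less)
    define r where "r = sqrt (N h)"
    have r: "r > 0" "r^2 = N h" using Npos unfolding r_def by auto
    define h' where "h' = restrict (\<lambda>i. h i / r) {..<n}"
    have Nh': "N h' = N h / r^2" unfolding N_def h'_def
      by (simp add: power_divide sum_divide_distrib)
    hence Nh'1: "N h' = 1" using r Npos by simp
    have "\<bar>h' i\<bar> \<le> 1" if i: "i < n" for i
    proof -
      have "(h' i)^2 \<le> N h'" unfolding N_def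
        by (rule member_le_sum[of i "{..<n}" "\<lambda>i. (h' i)^2", simplified]) (use i in auto)
      hence "(h' i)^2 \<le> 1^2" using Nh'1 by simp
      thus ?thesis using power2_le_imp_le[of "\<bar>h' i\<bar>" 1] by simp
    qed
    hence "h' i \<in> {-1..1}" if "i < n" for i using that by (simp add: abs_le_iff)
    moreover have "h' \<in> extensional {..<n}" unfolding h'_def by simp
    ultimately have "h' \<in> PiE {..<n} (\<lambda>_. {-1..1})" by (simp add: PiE_iff)
    hence "h' \<in> K" unfolding K_def using Nh'1 by simp
    hence "q h' \<le> lam" using fmax lam_def by auto
    moreover have "q h' = q h / r^2" unfolding q_def h'_def
      by (simp add: sum_divide_distrib power2_eq_square)
    ultimately have "q h / N h \<le> lam" using r by simp
    thus ?thesis using Npos by (simp add: pos_divide_le_eq mult.commute)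
  qed
  define u where "u i = (\<Sum>j<n. g i j * f j) - lam * f i" for i
  have "\<And>t. 2 * t * (\<Sum>i<n. (u i)^2) + t^2 * (q u - lam * N u) \<le> 0"
  proof -
    fix t :: real
    have "q (\<lambda>i. f i + t * u i) \<le> lam * N (\<lambda>i. f i + t * u i)" by (rule hom)
    also have "N (\<lambda>i. f i + t * u i) = N f + 2 * t * (\<Sum>i<n. u i * f i) + t^2 * N u"
    proof -
      have e: "(f i + t * u i)^2 = (f i)^2 + 2 * t * (u i * f i) + t^2 * (u i)^2" for i
        by (simp add: power2_eq_square algebra_simps)
      show ?thesis unfolding N_def e by (simp add: sum.distrib sum_distrib_left)
    qed
    also have "q (\<lambda>i. f i + t * u i) = q f + 2 * t * (\<Sum>i<n. u i * (\<Sum>j<n. g i j * f j)) + t^2 * q u"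
      unfolding q_def by (rule qform_expand[OF sym])
    finally have *: "lam + 2 * t * (\<Sum>i<n. u i * (\<Sum>j<n. g i j * f j)) + t^2 * q u
       \<le> lam * (1 + 2 * t * (\<Sum>i<n. u i * f i) + t^2 * N u)" using Nf lam_def by simp
    have "(\<Sum>i<n. u i * (\<Sum>j<n. g i j * f j)) - lam * (\<Sum>i<n. u i * f i) = (\<Sum>i<n. (u i)^2)"
    proof -
      have "(\<Sum>i<n. u i * (\<Sum>j<n. g i j * f j)) - lam * (\<Sum>i<n. u i * f i)
          = (\<Sum>i<n. u i * (\<Sum>j<n. g i j * f j) - lam * (u i * f i))"
        by (simp add: sum_subtractf sum_distrib_left)
      also have "\<dots> = (\<Sum>i<n. (u i)^2)"
        by (rule sum.cong) (auto simp: u_def power2_eq_square algebra_simps)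
      finally show ?thesis .
    qed
    with * show "2 * t * (\<Sum>i<n. (u i)^2) + t^2 * (q u - lam * N u) \<le> 0"
      by (simp add: algebra_simps)
  qed
  hence "(\<Sum>i<n. (u i)^2) = 0" by (rule lin_quad_nonpos) (simp add: sum_nonneg)
  hence "\<forall>i<n. u i = 0" by (simp add: sum_nonneg_eq_0_iff)
  hence "\<forall>i<n. (\<Sum>j<n. g i j * f j) = lam * f i" unfolding u_def by simp
  with Nf hom show ?thesis unfolding N_def q_def by blast
qed

lemma quad_form_sum:
  fixes G :: "real mat"
  assumes G: "G \<in> carrier_mat n n" and w: "w \<in> carrier_vec n"
  shows "w \<bullet> (G *\<^sub>v w) = (\<Sum>i<n. \<Sum>j<n. w $ i * G $$ (i,j) * w $ j)"
proof -
  have "w \<bullet> (G *\<^sub>v w) = (\<Sum>i<n. w $ i * (\<Sum>j<n. G $$ (i,j) * w $ j))"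
    unfolding scalar_prod_def using G w
    by (auto simp: lessThan_atLeast0 row_def scalar_prod_def intro!: sum.cong)
  also have "\<dots> = (\<Sum>i<n. \<Sum>j<n. w $ i * G $$ (i,j) * w $ j)"
    by (simp add: sum_distrib_left mult.assoc)
  finally show ?thesis .
qed

lemma self_scalar_sum:
  fixes w :: "real vec"
  assumes w: "w \<in> carrier_vec n"
  shows "w \<bullet> w = (\<Sum>i<n. (w $ i)^2)"
  unfolding scalar_prod_def using w by (auto simp: lessThan_atLeast0 power2_eq_square)

lemma self_scalar_pos:
  fixes w :: "real vec"
  assumes w: "w \<in> carrier_vec n" and nz: "w \<noteq> 0\<^sub>v n"
  shows "w \<bullet> w > 0"
proof -
  obtain i where i: "i < n" "w $ i \<noteq> 0" using nz w by (metis eq_vecI carrier_vecD index_zero_vec)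
  have "(w $ i)^2 \<le> (\<Sum>i<n. (w $ i)^2)"
    by (rule member_le_sum[of i "{..<n}" "\<lambda>i. (w $ i)^2", simplified]) (use i in auto)
  moreover have "(w $ i)^2 > 0" using i by simp
  ultimately show ?thesis using self_scalar_sum[OF w] by linarith
qed

lemma self_scalar_nonneg:
  fixes w :: "real vec"
  shows "0 \<le> w \<bullet> w"
  unfolding scalar_prod_def by (rule sum_nonneg) simp

lemma eig_max:
  fixes G :: "real mat"
  assumes G: "G \<in> carrier_mat n n" and n: "0 < n" and sym: "transpose_mat G = G"
  shows "\<exists>lam. eigenvalue G lam \<and> (\<forall>w\<in>carrier_vec n. w \<bullet> (G *\<^sub>v w) \<le> lam * (w \<bullet> w))"
proof -
  have symg: "G $$ (i,j) = G $$ (j,i)" if "i<n" "j<n" for i j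
    using that G by (metis carrier_matD index_transpose_mat sym)
  obtain f lam where f1: "(\<Sum>i<n. (f i)^2) = 1"
    and fe: "\<forall>i<n. (\<Sum>j<n. G $$ (i,j) * f j) = lam * f i"
    and fb: "\<forall>h. (\<Sum>i<n. \<Sum>j<n. h i * G $$ (i,j) * h j) \<le> lam * (\<Sum>i<n. (h i)^2)"
    using rayleigh_max_fun[of n "\<lambda>i j. G $$ (i,j)", OF n symg] by blast
  define v where "v = vec n f"
  have v: "v \<in> carrier_vec n" unfolding v_def by simp
  have "v \<noteq> 0\<^sub>v n"
  proof
    assume "v = 0\<^sub>v n"
    hence "\<forall>i<n. f i = 0" unfolding v_def by (metis index_vec index_zero_vec(1))
    hence "(\<Sum>i<n. (f i)^2) = 0" by simp
    with f1 show False by simp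
  qed
  moreover have "G *\<^sub>v v = lam \<cdot>\<^sub>v v"
  proof (rule eq_vecI)
    fix i assume "i < dim_vec (lam \<cdot>\<^sub>v v)"
    hence i: "i < n" using v by simp
    have "(G *\<^sub>v v) $ i = (\<Sum>j<n. G $$ (i,j) * f j)"
      using G i unfolding v_def scalar_prod_def
      by (auto simp: lessThan_atLeast0 row_def scalar_prod_def intro!: sum.cong)
    also have "\<dots> = lam * f i" using fe i by simp
    finally show "(G *\<^sub>v v) $ i = (lam \<cdot>\<^sub>v v) $ i" using i unfolding v_def by simp
  qed (use G v in simp)
  ultimately have "eigenvalue G lam" unfolding eigenvalue_def eigenvector_def using v G by auto
  moreover have "w \<bullet> (G *\<^sub>v w) \<le> lam * (w \<bullet> w)" if w: "w \<in> carrier_vec n" for w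
    unfolding quad_form_sum[OF G w] self_scalar_sum[OF w] using fb by blast
  ultimately show ?thesis by blast
qed

lemma eig_min:
  fixes G :: "real mat"
  assumes G: "G \<in> carrier_mat n n" and n: "0 < n" and sym: "transpose_mat G = G"
  shows "\<exists>lam. eigenvalue G lam \<and> (\<forall>w\<in>carrier_vec n. lam * (w \<bullet> w) \<le> w \<bullet> (G *\<^sub>v w))"
proof -
  have G': "-G \<in> carrier_mat n n" using G by simp
  have sym': "transpose_mat (-G) = -G"
    by (rule eq_matI) (use G sym in \<open>auto simp: carrier_matD\<close>, metis carrier_matD(1) carrier_matD(2) index_transpose_mat(1) sym)
  obtain lam where ev: "eigenvalue (-G) lam" and b: "\<forall>w\<in>carrier_vec n. w \<bullet> ((-G) *\<^sub>v w) \<le> lam * (w \<bullet> w)"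
    using eig_max[OF G' n sym'] by blast
  have neg: "(-G) *\<^sub>v w = - (G *\<^sub>v w)" if "w \<in> carrier_vec n" for w
    using that G by (intro eq_vecI) (auto simp: row_def scalar_prod_def sum_negf)
  from ev obtain v where v: "v \<in> carrier_vec n" "v \<noteq> 0\<^sub>v n" "(-G) *\<^sub>v v = lam \<cdot>\<^sub>v v"
    unfolding eigenvalue_def eigenvector_def using G by auto
  have "G *\<^sub>v v = (-lam) \<cdot>\<^sub>v v"
  proof -
    have "G *\<^sub>v v = - ((-G) *\<^sub>v v)" using neg[OF v(1)] by simp
    also have "\<dots> = (-lam) \<cdot>\<^sub>v v" using v(3) by (intro eq_vecI) auto
    finally show ?thesis .
  qed
  hence "eigenvalue G (-lam)" unfolding eigenvalue_def eigenvector_def using v G by auto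
  moreover have "(-lam) * (w \<bullet> w) \<le> w \<bullet> (G *\<^sub>v w)" if w: "w \<in> carrier_vec n" for w
  proof -
    have "w \<bullet> ((-G) *\<^sub>v w) = - (w \<bullet> (G *\<^sub>v w))" using neg[OF w] w G
      by (simp add: scalar_prod_uminus_right)
    thus ?thesis using b w by force
  qed
  ultimately show ?thesis by blast
qed

lemma transpose_self_mult_sym:
  fixes C :: "real mat"
  assumes C: "C \<in> carrier_mat a r"
  shows "transpose_mat (transpose_mat C * C) = transpose_mat C * C"
  using transpose_mult[of "transpose_mat C" r a C r] C by simp

lemma gram_quad:
  fixes C :: "real mat"
  assumes C: "C \<in> carrier_mat a r" and z: "z \<in> carrier_vec r"
  shows "z \<bullet> ((transpose_mat C * C) *\<^sub>v z) = (C *\<^sub>v z) \<bullet> (C *\<^sub>v z)"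
proof -
  have "(transpose_mat C * C) *\<^sub>v z = transpose_mat C *\<^sub>v (C *\<^sub>v z)"
    using C z by (simp add: assoc_mult_mat_vec[of _ r a])
  hence "z \<bullet> ((transpose_mat C * C) *\<^sub>v z) = (transpose_mat C *\<^sub>v (C *\<^sub>v z)) \<bullet> z"
    using C z by (simp add: comm_scalar_prod[of _ r])
  also have "\<dots> = (C *\<^sub>v z) \<bullet> (C *\<^sub>v z)"
    by (rule transpose_vec_mult_scalar[OF C z]) (use C z in simp)
  finally show ?thesis .
qed

lemma gram_spec:
  fixes C :: "real mat"
  assumes C: "C \<in> carrier_mat a r" and r: "0 < r"
  defines "E \<equiv> {k. eigenvalue (transpose_mat C * C) k}"
  shows "finite E" "E \<noteq> {}" "\<forall>k\<in>E. 0 \<le> k"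
    "\<forall>z\<in>carrier_vec r. (C *\<^sub>v z) \<bullet> (C *\<^sub>v z) \<le> Max E * (z \<bullet> z)"
    "\<forall>z\<in>carrier_vec r. Min E * (z \<bullet> z) \<le> (C *\<^sub>v z) \<bullet> (C *\<^sub>v z)"
    "\<forall>k\<in>E. \<exists>z\<in>carrier_vec r. z \<noteq> 0\<^sub>v r \<and> k * (z \<bullet> z) = (C *\<^sub>v z) \<bullet> (C *\<^sub>v z)"
    "Max E \<in> E" "Min E \<in> E"
proof -
  define G where "G = transpose_mat C * C"
  have G: "G \<in> carrier_mat r r" unfolding G_def using C by simp
  have sym: "transpose_mat G = G" unfolding G_def by (rule transpose_self_mult_sym[OF C])
  have E: "E = {k. eigenvalue G k}" unfolding E_def G_def ..
  have ev: "\<exists>z\<in>carrier_vec r. z \<noteq> 0\<^sub>v r \<and> k * (z \<bullet> z) = (C *\<^sub>v z) \<bullet> (C *\<^sub>v z)" if "k \<in> E" for k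
  proof -
    from that obtain z where z: "z \<in> carrier_vec r" "z \<noteq> 0\<^sub>v r" "G *\<^sub>v z = k \<cdot>\<^sub>v z"
      unfolding E eigenvalue_def eigenvector_def using G by auto
    have "z \<bullet> (G *\<^sub>v z) = k * (z \<bullet> z)" using z by simp
    thus ?thesis using gram_quad[OF C z(1)] z unfolding G_def by auto
  qed
  thus "\<forall>k\<in>E. \<exists>z\<in>carrier_vec r. z \<noteq> 0\<^sub>v r \<and> k * (z \<bullet> z) = (C *\<^sub>v z) \<bullet> (C *\<^sub>v z)" by blast
  have quad: "\<forall>z\<in>carrier_vec r. z \<bullet> (G *\<^sub>v z) = (C *\<^sub>v z) \<bullet> (C *\<^sub>v z)"
    unfolding G_def using gram_quad[OF C] by blast
  have "char_poly G \<noteq> 0" using degree_monic_char_poly[OF G] by auto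
  hence "finite {k. poly (char_poly G) k = 0}" by (rule poly_roots_finite)
  moreover have "E = {k. poly (char_poly G) k = 0}" unfolding E using eigenvalue_root_char_poly[OF G] by auto
  ultimately show fin: "finite E" by simp
  have ub: "k \<le> lam" if kE: "k \<in> E" and lb: "\<forall>w\<in>carrier_vec r. w \<bullet> (G *\<^sub>v w) \<le> lam * (w \<bullet> w)" for k lam
  proof -
    obtain z where z: "z \<in> carrier_vec r" "z \<noteq> 0\<^sub>v r" "k * (z \<bullet> z) = (C *\<^sub>v z) \<bullet> (C *\<^sub>v z)"
      using ev[OF kE] by blast
    have "k * (z \<bullet> z) = z \<bullet> (G *\<^sub>v z)" using quad z(1,3) by simp
    hence "k * (z \<bullet> z) \<le> lam * (z \<bullet> z)" using lb z(1) by simp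
    moreover have "z \<bullet> z > 0" by (rule self_scalar_pos[OF z(1,2)])
    ultimately show ?thesis by simp
  qed
  have lbd: "lam \<le> k" if kE: "k \<in> E" and lb: "\<forall>w\<in>carrier_vec r. lam * (w \<bullet> w) \<le> w \<bullet> (G *\<^sub>v w)" for k lam
  proof -
    obtain z where z: "z \<in> carrier_vec r" "z \<noteq> 0\<^sub>v r" "k * (z \<bullet> z) = (C *\<^sub>v z) \<bullet> (C *\<^sub>v z)"
      using ev[OF kE] by blast
    have "k * (z \<bullet> z) = z \<bullet> (G *\<^sub>v z)" using quad z(1,3) by simp
    hence "lam * (z \<bullet> z) \<le> k * (z \<bullet> z)" using lb z(1) by simp
    moreover have "z \<bullet> z > 0" by (rule self_scalar_pos[OF z(1,2)])
    ultimately show ?thesis by simp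
  qed
  obtain lmax where lmax: "eigenvalue G lmax" "\<forall>w\<in>carrier_vec r. w \<bullet> (G *\<^sub>v w) \<le> lmax * (w \<bullet> w)"
    using eig_max[OF G r sym] by blast
  obtain lmin where lmin: "eigenvalue G lmin" "\<forall>w\<in>carrier_vec r. lmin * (w \<bullet> w) \<le> w \<bullet> (G *\<^sub>v w)"
    using eig_min[OF G r sym] by blast
  have lmaxE: "lmax \<in> E" using lmax E by auto
  have lminE: "lmin \<in> E" using lmin E by auto
  show "E \<noteq> {}" using lmaxE by auto
  have MaxE: "Max E = lmax" by (rule Max_eqI[OF fin]) (use ub lmax lmaxE in auto)
  have MinE: "Min E = lmin" by (rule Min_eqI[OF fin]) (use lbd lmin lminE in auto)
  show "Max E \<in> E" "Min E \<in> E" using MaxE MinE lmaxE lminE by auto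
  show "\<forall>z\<in>carrier_vec r. (C *\<^sub>v z) \<bullet> (C *\<^sub>v z) \<le> Max E * (z \<bullet> z)"
    using lmax(2) quad unfolding MaxE by simp
  show "\<forall>z\<in>carrier_vec r. Min E * (z \<bullet> z) \<le> (C *\<^sub>v z) \<bullet> (C *\<^sub>v z)"
    using lmin(2) quad unfolding MinE by simp
  show "\<forall>k\<in>E. 0 \<le> k"
  proof
    fix k assume "k \<in> E"
    then obtain z where z: "z \<in> carrier_vec r" "z \<noteq> 0\<^sub>v r" "k * (z \<bullet> z) = (C *\<^sub>v z) \<bullet> (C *\<^sub>v z)"
      using ev by blast
    have "(C *\<^sub>v z) \<bullet> (C *\<^sub>v z) \<ge> 0" by (rule self_scalar_nonneg)
    moreover have "z \<bullet> z > 0" by (rule self_scalar_pos[OF z(1,2)])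
    ultimately have "0 \<le> k * (z \<bullet> z)" "z \<bullet> z > 0" using z(3) by auto
    thus "0 \<le> k" by (simp add: zero_le_mult_iff)
  qed
qed

lemma gram_as_tt:
  "gram_mat B = transpose_mat (if dim_col B \<le> dim_row B then B else transpose_mat B) *
                (if dim_col B \<le> dim_row B then B else transpose_mat B)"
  unfolding gram_mat_def by simp

lemma sv_image: "singular_values B = sqrt ` {k. eigenvalue (gram_mat B) k}"
  unfolding singular_values_def by auto

lemma sigma_facts:
  fixes B C :: "real mat"
  assumes C: "C \<in> carrier_mat a r" and r: "0 < r" and gB: "gram_mat B = transpose_mat C * C"
  defines "E \<equiv> {k. eigenvalue (transpose_mat C * C) k}"
  shows "sigma_max B = sqrt (Max E)" "sigma_min B = sqrt (Min E)"
proof -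
  have fin: "finite E" and ne: "E \<noteq> {}" using gram_spec[OF C r] unfolding E_def by auto
  have mono: "mono sqrt" by (rule monoI) simp
  show "sigma_max B = sqrt (Max E)" unfolding sigma_max_def sv_image gB E_def[symmetric]
    by (rule mono_Max_commute[OF mono fin ne, symmetric])
  show "sigma_min B = sqrt (Min E)" unfolding sigma_min_def sv_image gB E_def[symmetric]
    by (rule mono_Min_commute[OF mono fin ne, symmetric])
qed

lemma app0: "w \<in> carrier_vec 0 \<Longrightarrow> x @\<^sub>v w = x"
  by (intro eq_vecI) auto

lemma basis_carrier: "A \<in> carrier_mat m n \<Longrightarrow> basis_part A \<in> carrier_mat m m"
  unfolding basis_part_def by auto

lemma nonbasis_carrier: "A \<in> carrier_mat m n \<Longrightarrow> nonbasis_part A \<in> carrier_mat m (n - m)"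
  unfolding nonbasis_part_def by auto

lemma mat_inv_props:
  fixes B :: "real mat"
  assumes B: "B \<in> carrier_mat m m" and d: "det B \<noteq> 0"
  shows "mat_inv B \<in> carrier_mat m m" "mat_inv B * B = 1\<^sub>m m" "B * mat_inv B = 1\<^sub>m m"
proof -
  have u: "B \<in> Units (ring_mat TYPE(real) m ())" by (rule det_non_zero_imp_unit[OF B d])
  then obtain C where C: "C \<in> carrier_mat m m" "C * B = 1\<^sub>m m" "B * C = 1\<^sub>m m"
    unfolding Units_def ring_mat_def by auto
  have ex: "\<exists>C. C \<in> carrier_mat (dim_row B) (dim_row B) \<and> C * B = 1\<^sub>m (dim_row B) \<and> B * C = 1\<^sub>m (dim_row B)"
    using C B by auto
  from someI_ex[OF ex] show "mat_inv B \<in> carrier_mat m m" "mat_inv B * B = 1\<^sub>m m" "B * mat_inv B = 1\<^sub>m m"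
    unfolding mat_inv_def using B by auto
qed

lemma A_split:
  assumes A: "A \<in> carrier_mat m n" and mn: "m \<le> n"
  shows "A = four_block_mat (basis_part A) (nonbasis_part A) (0\<^sub>m 0 m) (0\<^sub>m 0 (n - m))"
  by (rule eq_matI) (use A mn in \<open>auto simp: basis_part_def nonbasis_part_def\<close>)

lemma null_basis_carrier:
  fixes A :: "real mat"
  assumes A: "A \<in> carrier_mat m n" and mn: "m \<le> n" and d: "det (basis_part A) \<noteq> 0"
  shows "null_basis A \<in> carrier_mat n (n - m)"
proof -
  note inv = mat_inv_props[OF basis_carrier[OF A] d]
  have K: "mat_inv (basis_part A) * nonbasis_part A \<in> carrier_mat m (n - m)"
    using inv(1) nonbasis_carrier[OF A] by simp
  show ?thesis unfolding null_basis_def Let_def using A mn K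
    by (auto intro!: carrier_matI)
qed

lemma null_basis_mult:
  fixes A :: "real mat"
  assumes A: "A \<in> carrier_mat m n" and mn: "m \<le> n" and d: "det (basis_part A) \<noteq> 0"
    and u: "u \<in> carrier_vec (n - m)"
  shows "null_basis A *\<^sub>v u = ((mat_inv (basis_part A) * nonbasis_part A) *\<^sub>v u) @\<^sub>v (- u)"
proof -
  note inv = mat_inv_props[OF basis_carrier[OF A] d]
  define K where "K = mat_inv (basis_part A) * nonbasis_part A"
  have K: "K \<in> carrier_mat m (n - m)" unfolding K_def
    using inv(1) nonbasis_carrier[OF A] by simp
  have V: "null_basis A = four_block_mat K (0\<^sub>m m 0) (- 1\<^sub>m (n - m)) (0\<^sub>m (n - m) 0)"
    unfolding null_basis_def Let_def K_def using A by simp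
  have uu: "u = u @\<^sub>v 0\<^sub>v 0" using app0[of "0\<^sub>v 0" u] by simp
  have "null_basis A *\<^sub>v u = four_block_mat K (0\<^sub>m m 0) (- 1\<^sub>m (n - m)) (0\<^sub>m (n - m) 0) *\<^sub>v (u @\<^sub>v 0\<^sub>v 0)"
    using V uu by simp
  also have "\<dots> = (K *\<^sub>v u + 0\<^sub>m m 0 *\<^sub>v 0\<^sub>v 0) @\<^sub>v (- 1\<^sub>m (n - m) *\<^sub>v u + 0\<^sub>m (n - m) 0 *\<^sub>v 0\<^sub>v 0)"
    by (rule four_block_mat_mult_vec) (use K u in auto)
  also have "K *\<^sub>v u + 0\<^sub>m m 0 *\<^sub>v 0\<^sub>v 0 = K *\<^sub>v u" using K u by (intro eq_vecI) auto
  also have "- 1\<^sub>m (n - m) *\<^sub>v u + 0\<^sub>m (n - m) 0 *\<^sub>v 0\<^sub>v 0 = - u" using u by (intro eq_vecI) auto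
  finally show ?thesis unfolding K_def .
qed

lemma A_null_basis:
  fixes A :: "real mat"
  assumes A: "A \<in> carrier_mat m n" and mn: "m \<le> n" and d: "det (basis_part A) \<noteq> 0"
    and u: "u \<in> carrier_vec (n - m)"
  shows "A *\<^sub>v (null_basis A *\<^sub>v u) = 0\<^sub>v m"
proof -
  note inv = mat_inv_props[OF basis_carrier[OF A] d]
  define AB where "AB = basis_part A"
  define AN where "AN = nonbasis_part A"
  have AB: "AB \<in> carrier_mat m m" and AN: "AN \<in> carrier_mat m (n - m)"
    unfolding AB_def AN_def using basis_carrier[OF A] nonbasis_carrier[OF A] by auto
  define Ki where "Ki = mat_inv AB"
  have Ki: "Ki \<in> carrier_mat m m" "AB * Ki = 1\<^sub>m m" using inv unfolding Ki_def AB_def by auto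
  have Ku: "(Ki * AN) *\<^sub>v u \<in> carrier_vec m" using Ki AN u by simp
  have "A *\<^sub>v (null_basis A *\<^sub>v u) = four_block_mat AB AN (0\<^sub>m 0 m) (0\<^sub>m 0 (n - m)) *\<^sub>v (((Ki * AN) *\<^sub>v u) @\<^sub>v (- u))"
    using null_basis_mult[OF A mn d u] A_split[OF A mn] unfolding AB_def AN_def Ki_def by simp
  also have "\<dots> = (AB *\<^sub>v ((Ki * AN) *\<^sub>v u) + AN *\<^sub>v (- u)) @\<^sub>v (0\<^sub>m 0 m *\<^sub>v ((Ki * AN) *\<^sub>v u) + 0\<^sub>m 0 (n - m) *\<^sub>v (- u))"
    by (rule four_block_mat_mult_vec) (use AB AN Ku u in auto)
  also have "\<dots> = AB *\<^sub>v ((Ki * AN) *\<^sub>v u) + AN *\<^sub>v (- u)"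
    by (rule app0, intro add_carrier_vec mult_mat_vec_carrier zero_carrier_mat) (use Ku u Ki AN in auto)
  also have "AB *\<^sub>v ((Ki * AN) *\<^sub>v u) = AN *\<^sub>v u"
  proof -
    have e1: "(Ki * AN) *\<^sub>v u = Ki *\<^sub>v (AN *\<^sub>v u)"
      by (rule assoc_mult_mat_vec) (use Ki AN u in auto)
    have e2: "(AB * Ki) *\<^sub>v (AN *\<^sub>v u) = AB *\<^sub>v (Ki *\<^sub>v (AN *\<^sub>v u))"
      by (rule assoc_mult_mat_vec) (use Ki AB AN u in auto)
    have "AN *\<^sub>v u \<in> carrier_vec m" using AN u by simp
    thus ?thesis using e1 e2 Ki(2) by simp
  qed
  also have "AN *\<^sub>v u + AN *\<^sub>v (- u) = 0\<^sub>v m" using AN u by (intro eq_vecI) (auto simp: scalar_prod_uminus_right)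
  finally show ?thesis .
qed

lemma diag_vec_carrier: "x \<in> carrier_vec n \<Longrightarrow> diag_vec x \<in> carrier_mat n n"
  unfolding diag_vec_def by auto

lemma diag_vec_mult:
  fixes x w :: "real vec"
  assumes x: "x \<in> carrier_vec n" and w: "w \<in> carrier_vec n" and i: "i < n"
  shows "(diag_vec x *\<^sub>v w) $ i = x $ i * w $ i"
proof -
  have "(diag_vec x *\<^sub>v w) $ i = (\<Sum>j\<in>{0..<n}. (if i = j then x $ i else 0) * w $ j)"
    using x w i unfolding diag_vec_def
    by (auto simp: scalar_prod_def row_def)
  also have "\<dots> = (\<Sum>j\<in>{0..<n}. (if i = j then x $ i * w $ j else 0))"
    by (rule sum.cong) auto
  also have "\<dots> = x $ i * w $ i" using i by (subst sum.delta') auto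
  finally show ?thesis .
qed

lemma VAQ_T_mult:
  fixes A Q :: "real mat"
  assumes A: "A \<in> carrier_mat m n" and mn: "m \<le> n" and d: "det (basis_part A) \<noteq> 0"
    and Q: "Q \<in> carrier_mat n n" and Qs: "transpose_mat Q = Q"
    and u: "u \<in> carrier_vec (n - m)" and v: "v \<in> carrier_vec m"
  shows "transpose_mat (four_block_mat (transpose_mat (null_basis A)) (0\<^sub>m (n - m) n) (0\<^sub>m m n) A *
                four_block_mat (1\<^sub>m n) (- Q) (0\<^sub>m n n) (1\<^sub>m n)) *\<^sub>v (u @\<^sub>v v)
     = (null_basis A *\<^sub>v u) @\<^sub>v (transpose_mat A *\<^sub>v v - Q *\<^sub>v (null_basis A *\<^sub>v u))"
proof -
  define V where "V = null_basis A"
  have V: "V \<in> carrier_mat n (n - m)" unfolding V_def by (rule null_basis_carrier[OF A mn d])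
  define F1 where "F1 = four_block_mat (transpose_mat V) (0\<^sub>m (n - m) n) (0\<^sub>m m n) A"
  define F2 where "F2 = four_block_mat (1\<^sub>m n) (- Q) (0\<^sub>m n n) (1\<^sub>m n)"
  have F1: "F1 \<in> carrier_mat (n - m + m) (n + n)" unfolding F1_def using V A by auto
  have F2: "F2 \<in> carrier_mat (n + n) (n + n)" unfolding F2_def using Q by auto
  have T1: "transpose_mat F1 = four_block_mat V (0\<^sub>m n m) (0\<^sub>m n (n - m)) (transpose_mat A)"
    unfolding F1_def by (subst transpose_four_block_mat[of _ "n - m" n _ n _ m]) (use V A in auto)
  have T2: "transpose_mat F2 = four_block_mat (1\<^sub>m n) (0\<^sub>m n n) (- Q) (1\<^sub>m n)"
    unfolding F2_def by (subst transpose_four_block_mat[of _ n n _ n _ n]) (use Q Qs in \<open>auto simp: transpose_uminus\<close>)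
  have "transpose_mat (F1 * F2) = transpose_mat F2 * transpose_mat F1"
    by (rule transpose_mult[OF F1 F2])
  define p where "p = V *\<^sub>v u"
  define a where "a = transpose_mat A *\<^sub>v v"
  have p: "p \<in> carrier_vec n" unfolding p_def using V u by simp
  have a: "a \<in> carrier_vec n" unfolding a_def using A v by simp
  have s1: "transpose_mat F1 *\<^sub>v (u @\<^sub>v v) = p @\<^sub>v a"
  proof -
    have "transpose_mat F1 *\<^sub>v (u @\<^sub>v v) = (V *\<^sub>v u + 0\<^sub>m n m *\<^sub>v v) @\<^sub>v (0\<^sub>m n (n - m) *\<^sub>v u + transpose_mat A *\<^sub>v v)"
      unfolding T1 by (rule four_block_mat_mult_vec) (use V A u v in auto)
    also have "V *\<^sub>v u + 0\<^sub>m n m *\<^sub>v v = p" unfolding p_def using V u v by (intro eq_vecI) auto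
    also have "0\<^sub>m n (n - m) *\<^sub>v u + transpose_mat A *\<^sub>v v = a" unfolding a_def using A u v by (intro eq_vecI) auto
    finally show ?thesis .
  qed
  have s2: "transpose_mat F2 *\<^sub>v (p @\<^sub>v a) = p @\<^sub>v (a - Q *\<^sub>v p)"
  proof -
    have "transpose_mat F2 *\<^sub>v (p @\<^sub>v a) = (1\<^sub>m n *\<^sub>v p + 0\<^sub>m n n *\<^sub>v a) @\<^sub>v (- Q *\<^sub>v p + 1\<^sub>m n *\<^sub>v a)"
      unfolding T2 by (rule four_block_mat_mult_vec) (use Q p a in auto)
    also have "1\<^sub>m n *\<^sub>v p + 0\<^sub>m n n *\<^sub>v a = p" using p a by (intro eq_vecI) auto
    also have "- Q *\<^sub>v p + 1\<^sub>m n *\<^sub>v a = a - Q *\<^sub>v p" using Q p a by (intro eq_vecI) auto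
    finally show ?thesis .
  qed
  have "transpose_mat (F1 * F2) *\<^sub>v (u @\<^sub>v v) = transpose_mat F2 *\<^sub>v (transpose_mat F1 *\<^sub>v (u @\<^sub>v v))"
    unfolding \<open>transpose_mat (F1 * F2) = transpose_mat F2 * transpose_mat F1\<close>
    by (rule assoc_mult_mat_vec) (use F1 F2 u v in auto)
  also have "\<dots> = p @\<^sub>v (a - Q *\<^sub>v p)" unfolding s1 s2 ..
  finally show ?thesis unfolding F1_def F2_def p_def a_def V_def .
qed

lemma M_entry:
  fixes A Q :: "real mat" and x s :: "real vec"
  assumes A: "A \<in> carrier_mat m n" and mn: "m \<le> n" and d: "det (basis_part A) \<noteq> 0"
    and Q: "Q \<in> carrier_mat n n" and x: "x \<in> carrier_vec n" and s: "s \<in> carrier_vec n"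
    and u: "u \<in> carrier_vec (n - m)" and v: "v \<in> carrier_vec m"
  defines "Mz \<equiv> four_block_mat (diag_vec s * null_basis A + diag_vec x * Q * null_basis A)
                 (- (diag_vec x * transpose_mat A)) (0\<^sub>m 0 (n - m)) (0\<^sub>m 0 m) *\<^sub>v (u @\<^sub>v v)"
  shows "Mz \<in> carrier_vec n"
    "\<And>i. i < n \<Longrightarrow> Mz $ i = s $ i * (null_basis A *\<^sub>v u) $ i
        - x $ i * (transpose_mat A *\<^sub>v v - Q *\<^sub>v (null_basis A *\<^sub>v u)) $ i"
proof -
  define V where "V = null_basis A"
  have V: "V \<in> carrier_mat n (n - m)" unfolding V_def by (rule null_basis_carrier[OF A mn d])
  define X where "X = diag_vec x"
  define S where "S = diag_vec s"
  have X: "X \<in> carrier_mat n n" unfolding X_def by (rule diag_vec_carrier[OF x])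
  have S: "S \<in> carrier_mat n n" unfolding S_def by (rule diag_vec_carrier[OF s])
  define B1 where "B1 = S * V + X * Q * V"
  define B2 where "B2 = - (X * transpose_mat A)"
  have B1: "B1 \<in> carrier_mat n (n - m)" unfolding B1_def using S V X Q by auto
  have B2: "B2 \<in> carrier_mat n m" unfolding B2_def using X A by auto
  define p where "p = V *\<^sub>v u"
  define a where "a = transpose_mat A *\<^sub>v v"
  have p: "p \<in> carrier_vec n" unfolding p_def using V u by simp
  have a: "a \<in> carrier_vec n" unfolding a_def using A v by simp
  have "Mz = (B1 *\<^sub>v u + B2 *\<^sub>v v) @\<^sub>v (0\<^sub>m 0 (n - m) *\<^sub>v u + 0\<^sub>m 0 m *\<^sub>v v)"
    unfolding Mz_def V_def[symmetric] X_def[symmetric] S_def[symmetric] B1_def[symmetric] B2_def[symmetric]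
    by (rule four_block_mat_mult_vec) (use B1 B2 u v in auto)
  also have "\<dots> = B1 *\<^sub>v u + B2 *\<^sub>v v"
    by (rule app0, intro add_carrier_vec mult_mat_vec_carrier zero_carrier_mat) (use u v in auto)
  finally have Mz: "Mz = B1 *\<^sub>v u + B2 *\<^sub>v v" .
  show "Mz \<in> carrier_vec n" unfolding Mz using B1 B2 u v by auto
  have e1: "B1 *\<^sub>v u = S *\<^sub>v p + X *\<^sub>v (Q *\<^sub>v p)"
  proof -
    have "B1 *\<^sub>v u = (S * V) *\<^sub>v u + (X * Q * V) *\<^sub>v u"
      unfolding B1_def by (rule add_mult_distrib_mat_vec) (use S V X Q u in auto)
    also have "(S * V) *\<^sub>v u = S *\<^sub>v p" unfolding p_def
      by (rule assoc_mult_mat_vec) (use S V u in auto)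
    also have "(X * Q * V) *\<^sub>v u = (X * Q) *\<^sub>v p" unfolding p_def
      by (rule assoc_mult_mat_vec) (use X Q V u in auto)
    also have "(X * Q) *\<^sub>v p = X *\<^sub>v (Q *\<^sub>v p)"
      by (rule assoc_mult_mat_vec) (use X Q p in auto)
    finally show ?thesis .
  qed
  have e2: "B2 *\<^sub>v v = - (X *\<^sub>v a)"
  proof -
    have "B2 *\<^sub>v v = - ((X * transpose_mat A) *\<^sub>v v)" unfolding B2_def
      by (rule uminus_mult_mat_vec) (use X A v in auto)
    also have "(X * transpose_mat A) *\<^sub>v v = X *\<^sub>v a" unfolding a_def
      by (rule assoc_mult_mat_vec) (use X A v in auto)
    finally show ?thesis .
  qed
  fix i assume i: "i < n"
  have Qp: "Q *\<^sub>v p \<in> carrier_vec n" using Q p by simp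
  have "Mz $ i = (S *\<^sub>v p) $ i + (X *\<^sub>v (Q *\<^sub>v p)) $ i - (X *\<^sub>v a) $ i"
    unfolding Mz e1 e2 using i S X p Qp a by simp
  also have "\<dots> = s $ i * p $ i + x $ i * (Q *\<^sub>v p) $ i - x $ i * a $ i"
    unfolding S_def X_def using diag_vec_mult[OF s p i] diag_vec_mult[OF x Qp i] diag_vec_mult[OF x a i] by simp
  also have "\<dots> = s $ i * p $ i - x $ i * (a - Q *\<^sub>v p) $ i"
  proof -
    have dq: "dim_vec (Q *\<^sub>v p) = n" using Qp by (rule carrier_vecD)
    have h: "(a - Q *\<^sub>v p) $ i = a $ i - (Q *\<^sub>v p) $ i"
      by (rule index_minus_vec(1)) (simp only: dq i)
    show ?thesis unfolding h by (simp only: right_diff_distrib diff_diff_eq2 add_diff_eq)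
  qed
  finally show "Mz $ i = s $ i * (null_basis A *\<^sub>v u) $ i
        - x $ i * (transpose_mat A *\<^sub>v v - Q *\<^sub>v (null_basis A *\<^sub>v u)) $ i"
    unfolding p_def a_def V_def .
qed

lemma ineq_upper:
  fixes P T xx ss :: "nat \<Rightarrow> real" and w :: real
  assumes h: "\<And>i. i < n \<Longrightarrow> 0 < xx i \<and> 0 < ss i \<and> xx i \<le> w \<and> ss i \<le> w"
  shows "(\<Sum>i<n. (ss i * P i - xx i * T i)^2) \<le> 2 * w^2 * ((\<Sum>i<n. (P i)^2) + (\<Sum>i<n. (T i)^2))"
proof -
  have t: "(ss i * P i - xx i * T i)^2 \<le> 2 * w^2 * (P i)^2 + 2 * w^2 * (T i)^2" if i: "i < n" for i
  proof -
    have a: "(ss i * P i - xx i * T i)^2 \<le> 2 * (ss i)^2 * (P i)^2 + 2 * (xx i)^2 * (T i)^2"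
      using sum_squares_ge_zero[of "ss i * P i + xx i * T i" 0]
      by (simp add: power2_eq_square algebra_simps)
    have s2: "(ss i)^2 \<le> w^2" using h[OF i] by (intro power_mono) auto
    have x2: "(xx i)^2 \<le> w^2" using h[OF i] by (intro power_mono) auto
    have "2 * (ss i)^2 * (P i)^2 \<le> 2 * w^2 * (P i)^2" using s2 by (intro mult_right_mono) auto
    moreover have "2 * (xx i)^2 * (T i)^2 \<le> 2 * w^2 * (T i)^2" using x2 by (intro mult_right_mono) auto
    ultimately show ?thesis using a by linarith
  qed
  have "(\<Sum>i<n. (ss i * P i - xx i * T i)^2) \<le> (\<Sum>i<n. 2 * w^2 * (P i)^2 + 2 * w^2 * (T i)^2)"
    by (rule sum_mono) (use t in auto)
  also have "\<dots> = 2 * w^2 * ((\<Sum>i<n. (P i)^2) + (\<Sum>i<n. (T i)^2))"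
    by (simp add: sum.distrib sum_distrib_left distrib_left)
  finally show ?thesis .
qed

lemma ineq_lower:
  fixes P T xx ss :: "nat \<Rightarrow> real" and w \<beta> :: real
  assumes h: "\<And>i. i < n \<Longrightarrow> 0 < xx i \<and> 0 < ss i \<and> xx i \<le> w \<and> ss i \<le> w \<and> \<beta> \<le> xx i * ss i"
    and b: "0 < \<beta>" and pt: "(\<Sum>i<n. P i * T i) \<le> 0"
  shows "\<beta>^2 / w^2 * ((\<Sum>i<n. (P i)^2) + (\<Sum>i<n. (T i)^2)) \<le> (\<Sum>i<n. (ss i * P i - xx i * T i)^2)"
proof -
  define c where "c = \<beta> / w^2"
  have t: "\<beta> * (c * (P i)^2 + c * (T i)^2 - 2 * (P i * T i)) \<le> (ss i * P i - xx i * T i)^2"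
    if i: "i < n" for i
  proof -
    have x: "0 < xx i" and s: "0 < ss i" and xw: "xx i \<le> w" and sw: "ss i \<le> w" and bxs: "\<beta> \<le> xx i * ss i"
      using h[OF i] by auto
    define B where "B = (ss i / xx i) * (P i)^2 + (xx i / ss i) * (T i)^2 - 2 * (P i * T i)"
    have eq: "(ss i * P i - xx i * T i)^2 = (xx i * ss i) * B"
      unfolding B_def using x s by (simp add: field_simps power2_eq_square)
    have Bnn: "0 \<le> B"
    proof -
      have "0 \<le> (ss i * P i - xx i * T i)^2" by simp
      hence "0 \<le> (xx i * ss i) * B" using eq by simp
      moreover have "0 < xx i * ss i" using x s by simp
      ultimately show ?thesis by (simp add: zero_le_mult_iff)
    qed
    have w2: "0 < w^2" using x xw by simp
    have c1: "c \<le> ss i / xx i"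
    proof -
      have "ss i / xx i = (xx i * ss i) / (xx i)^2" using x by (simp add: power2_eq_square)
      moreover have "\<beta> / w^2 \<le> (xx i * ss i) / (xx i)^2"
        by (rule frac_le) (use b bxs x xw in \<open>auto intro: power_mono\<close>)
      ultimately show ?thesis unfolding c_def by simp
    qed
    have c2: "c \<le> xx i / ss i"
    proof -
      have "xx i / ss i = (xx i * ss i) / (ss i)^2" using s by (simp add: power2_eq_square)
      moreover have "\<beta> / w^2 \<le> (xx i * ss i) / (ss i)^2"
        by (rule frac_le) (use b bxs s sw in \<open>auto intro: power_mono\<close>)
      ultimately show ?thesis unfolding c_def by simp
    qed
    have "c * (P i)^2 + c * (T i)^2 - 2 * (P i * T i) \<le> B"
      unfolding B_def using c1 c2 by (intro diff_right_mono add_mono mult_right_mono) auto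
    hence "\<beta> * (c * (P i)^2 + c * (T i)^2 - 2 * (P i * T i)) \<le> \<beta> * B"
      using b by (intro mult_left_mono) auto
    also have "\<beta> * B \<le> (xx i * ss i) * B" using bxs Bnn by (intro mult_right_mono) auto
    finally show ?thesis using eq by simp
  qed
  have "(\<Sum>i<n. \<beta> * (c * (P i)^2 + c * (T i)^2 - 2 * (P i * T i))) \<le> (\<Sum>i<n. (ss i * P i - xx i * T i)^2)"
    by (rule sum_mono) (use t in auto)
  moreover have "(\<Sum>i<n. \<beta> * (c * (P i)^2 + c * (T i)^2 - 2 * (P i * T i)))
     = \<beta> * c * ((\<Sum>i<n. (P i)^2) + (\<Sum>i<n. (T i)^2)) - 2 * \<beta> * (\<Sum>i<n. P i * T i)"
    by (simp add: sum.distrib sum_subtractf sum_distrib_left algebra_simps)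
  moreover have "0 \<le> - 2 * \<beta> * (\<Sum>i<n. P i * T i)" using b pt
    by (simp add: mult_nonneg_nonpos2 mult_le_0_iff)
  moreover have "\<beta> * c * ((\<Sum>i<n. (P i)^2) + (\<Sum>i<n. (T i)^2)) = \<beta>^2 / w^2 * ((\<Sum>i<n. (P i)^2) + (\<Sum>i<n. (T i)^2))"
    unfolding c_def by (simp add: power2_eq_square)
  ultimately show ?thesis by linarith
qed

lemma key_ineqs:
  fixes A Q :: "real mat" and x s z :: "real vec" and w \<beta> :: real
  assumes A: "A \<in> carrier_mat m n" and mn: "m \<le> n" and d: "det (basis_part A) \<noteq> 0"
    and Q: "Q \<in> carrier_mat n n" and Qpsd: "psd Q"
    and x: "x \<in> carrier_vec n" and s: "s \<in> carrier_vec n"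
    and hh: "\<forall>i<n. 0 < x $ i \<and> 0 < s $ i \<and> x $ i \<le> w \<and> s $ i \<le> w \<and> \<beta> \<le> x $ i * s $ i"
    and b: "0 < \<beta>" and z: "z \<in> carrier_vec n"
  defines "Wz \<equiv> transpose_mat (four_block_mat (transpose_mat (null_basis A)) (0\<^sub>m (n - m) n) (0\<^sub>m m n) A *
                four_block_mat (1\<^sub>m n) (- Q) (0\<^sub>m n n) (1\<^sub>m n)) *\<^sub>v z"
    and "Mz \<equiv> four_block_mat (diag_vec s * null_basis A + diag_vec x * Q * null_basis A)
                 (- (diag_vec x * transpose_mat A)) (0\<^sub>m 0 (n - m)) (0\<^sub>m 0 m) *\<^sub>v z"
  shows "Mz \<bullet> Mz \<le> 2 * w^2 * (Wz \<bullet> Wz)"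
    "\<beta>^2 / w^2 * (Wz \<bullet> Wz) \<le> Mz \<bullet> Mz"
    "z \<noteq> 0\<^sub>v n \<Longrightarrow> Wz \<noteq> 0\<^sub>v (n + n)"
proof -
  have h: "\<And>i. i < n \<Longrightarrow> 0 < x $ i \<and> 0 < s $ i \<and> x $ i \<le> w \<and> s $ i \<le> w \<and> \<beta> \<le> x $ i * s $ i"
    using hh by blast
  have Qs: "transpose_mat Q = Q" using Qpsd unfolding psd_def by auto
  define V where "V = null_basis A"
  have V: "V \<in> carrier_mat n (n - m)" unfolding V_def by (rule null_basis_carrier[OF A mn d])
  define u where "u = vec_first z (n - m)"
  define v where "v = vec_last z m"
  have u: "u \<in> carrier_vec (n - m)" and v: "v \<in> carrier_vec m" unfolding u_def v_def by auto
  have zz: "z = u @\<^sub>v v" unfolding u_def v_def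
    by (rule vec_first_last_append[symmetric]) (use z mn in simp)
  define p where "p = V *\<^sub>v u"
  define t where "t = transpose_mat A *\<^sub>v v - Q *\<^sub>v p"
  have p: "p \<in> carrier_vec n" unfolding p_def using V u by simp
  have t: "t \<in> carrier_vec n" unfolding t_def using A v Q p by simp
  have Wz: "Wz = p @\<^sub>v t" unfolding Wz_def zz p_def t_def V_def
    by (rule VAQ_T_mult[OF A mn d Q Qs u v])
  have WW: "Wz \<bullet> Wz = (\<Sum>i<n. (p $ i)^2) + (\<Sum>i<n. (t $ i)^2)"
    unfolding Wz scalar_prod_append[OF p t p t] self_scalar_sum[OF p] self_scalar_sum[OF t] ..
  note ME = M_entry[OF A mn d Q x s u v]
  have Mc: "Mz \<in> carrier_vec n" unfolding Mz_def zz using ME(1) .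
  have Mi: "Mz $ i = s $ i * p $ i - x $ i * t $ i" if "i < n" for i
    unfolding Mz_def zz p_def t_def V_def using ME(2)[OF that] .
  have MM: "Mz \<bullet> Mz = (\<Sum>i<n. (s $ i * p $ i - x $ i * t $ i)^2)"
    unfolding self_scalar_sum[OF Mc] by (rule sum.cong) (auto simp: Mi)
  have Ap: "A *\<^sub>v p = 0\<^sub>v m" unfolding p_def V_def by (rule A_null_basis[OF A mn d u])
  have pt: "(\<Sum>i<n. p $ i * t $ i) \<le> 0"
  proof -
    have Qp: "Q *\<^sub>v p \<in> carrier_vec n" using Q p by simp
    have Av: "transpose_mat A *\<^sub>v v \<in> carrier_vec n" using A v by simp
    have "p \<bullet> t = p \<bullet> (transpose_mat A *\<^sub>v v) - p \<bullet> (Q *\<^sub>v p)"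
      unfolding t_def by (rule scalar_prod_minus_distrib[OF p Av Qp])
    also have "p \<bullet> (transpose_mat A *\<^sub>v v) = (transpose_mat A *\<^sub>v v) \<bullet> p"
      by (rule comm_scalar_prod[OF p Av])
    also have "\<dots> = v \<bullet> (A *\<^sub>v p)" by (rule transpose_vec_mult_scalar[OF A p v])
    also have "\<dots> = 0" unfolding Ap using v by simp
    also have "p \<bullet> (Q *\<^sub>v p) \<ge> 0" using Qpsd p Q unfolding psd_def by auto
    hence "0 - p \<bullet> (Q *\<^sub>v p) \<le> 0" by simp
    finally have "p \<bullet> t \<le> 0" .
    moreover have "p \<bullet> t = (\<Sum>i<n. p $ i * t $ i)"
      unfolding scalar_prod_def using t by (simp add: lessThan_atLeast0)
    ultimately show ?thesis by simp
  qed
  have hx: "\<And>i. i < n \<Longrightarrow> 0 < x $ i \<and> 0 < s $ i \<and> x $ i \<le> w \<and> s $ i \<le> w"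
    using h by blast
  show "Mz \<bullet> Mz \<le> 2 * w^2 * (Wz \<bullet> Wz)"
    unfolding MM WW by (rule ineq_upper[of n "\<lambda>i. x $ i" "\<lambda>i. s $ i" w "\<lambda>i. p $ i" "\<lambda>i. t $ i", OF hx])
  show "\<beta>^2 / w^2 * (Wz \<bullet> Wz) \<le> Mz \<bullet> Mz"
    unfolding MM WW by (rule ineq_lower[of n "\<lambda>i. x $ i" "\<lambda>i. s $ i" w \<beta> "\<lambda>i. p $ i" "\<lambda>i. t $ i", OF h b pt])
  assume z0: "z \<noteq> 0\<^sub>v n"
  show "Wz \<noteq> 0\<^sub>v (n + n)"
  proof
    assume W0: "Wz = 0\<^sub>v (n + n)"
    have p0: "p $ i = 0" if "i < n" for i
    proof -
      have "Wz $ i = p $ i" unfolding Wz using that p t by simp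
      thus ?thesis using W0 that by simp
    qed
    have t0: "t $ i = 0" if "i < n" for i
    proof -
      have "Wz $ (n + i) = t $ i" unfolding Wz using that p t by simp
      thus ?thesis using W0 that by simp
    qed
    have pK: "p = ((mat_inv (basis_part A) * nonbasis_part A) *\<^sub>v u) @\<^sub>v (- u)"
      unfolding p_def V_def by (rule null_basis_mult[OF A mn d u])
    have Kc: "(mat_inv (basis_part A) * nonbasis_part A) *\<^sub>v u \<in> carrier_vec m"
      using mat_inv_props(1)[OF basis_carrier[OF A] d] nonbasis_carrier[OF A] u by simp
    have u0: "u = 0\<^sub>v (n - m)"
    proof (rule eq_vecI)
      fix j assume "j < dim_vec (0\<^sub>v (n - m))"
      hence j: "j < n - m" by simp
      have dK: "dim_vec ((mat_inv (basis_part A) * nonbasis_part A) *\<^sub>v u) = m" using Kc by (rule carrier_vecD)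
      have du: "dim_vec u = n - m" using u by (rule carrier_vecD)
      have dr: "dim_row (mat_inv (basis_part A)) = m"
        using mat_inv_props(1)[OF basis_carrier[OF A] d] by simp
      have "p $ (m + j) = (if m + j < m then ((mat_inv (basis_part A) * nonbasis_part A) *\<^sub>v u) $ (m + j)
            else (- u) $ (m + j - m))"
        unfolding pK by (subst index_append_vec(1)) (simp_all add: dK du j dr)
      also have "\<dots> = - u $ j" using du j by simp
      finally have "p $ (m + j) = - u $ j" .
      moreover have "p $ (m + j) = 0" using p0 j by simp
      ultimately show "u $ j = 0\<^sub>v (n - m) $ j" using j by simp
    qed (use u in simp)
    have "p = 0\<^sub>v n" using p p0 by (intro eq_vecI) auto
    hence "Q *\<^sub>v p = 0\<^sub>v n" using Q by (intro eq_vecI) auto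
    hence tA: "t = transpose_mat A *\<^sub>v v" unfolding t_def using A v by (intro eq_vecI) auto
    define AB where "AB = basis_part A"
    have AB: "AB \<in> carrier_mat m m" unfolding AB_def by (rule basis_carrier[OF A])
    have ABT: "transpose_mat AB *\<^sub>v v = 0\<^sub>v m"
    proof (rule eq_vecI)
      fix j assume "j < dim_vec (0\<^sub>v m)"
      hence j: "j < m" by simp
      have "(transpose_mat AB *\<^sub>v v) $ j = (transpose_mat A *\<^sub>v v) $ j"
        using j mn A v unfolding AB_def basis_part_def by (auto simp: scalar_prod_def)
      also have "\<dots> = t $ j" using tA by simp
      also have "\<dots> = 0" using t0 j mn by simp
      finally show "(transpose_mat AB *\<^sub>v v) $ j = 0\<^sub>v m $ j" using j by simp
    qed (use AB in simp)
    have "det (transpose_mat AB) \<noteq> 0" using d det_transpose[OF AB] unfolding AB_def by simp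
    hence v0: "v = 0\<^sub>v m" using det_0_iff_vec_prod_zero[of "transpose_mat AB" m] AB ABT v by auto
    have "z = 0\<^sub>v n"
    proof (rule eq_vecI)
      fix i assume "i < dim_vec (0\<^sub>v n)"
      hence i: "i < n" by simp
      show "z $ i = 0\<^sub>v n $ i" unfolding zz u0 v0 using i mn by simp
    qed (use z in simp)
    with z0 show False by simp
  qed
qed

lemma final_arith:
  fixes a b A' B' w \<beta> \<mu> sq :: real
  assumes aA: "a \<le> 2 * w^2 * A'" and bB: "\<beta>^2 / w^2 * B' \<le> b" and B': "0 < B'" and A': "0 \<le> A'"
    and a: "0 \<le> a" and w: "0 < w" and mu: "0 < \<mu>" and bmu: "2 / 3 * \<mu> \<le> \<beta>" and sq: "0 \<le> sq"
  shows "0 < sqrt b \<and> sqrt a / sqrt b \<le> 3 * ((w^2 + \<mu> * sq) / \<mu>) * (sqrt A' / sqrt B')"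
proof -
  have b: "0 < \<beta>" using mu bmu by linarith
  have sa: "sqrt a \<le> sqrt 2 * w * sqrt A'"
  proof -
    have "sqrt a \<le> sqrt (2 * w^2 * A')" using aA by (rule real_sqrt_le_mono)
    also have "\<dots> = sqrt 2 * w * sqrt A'" using w by (simp add: real_sqrt_mult)
    finally show ?thesis .
  qed
  have sb: "\<beta> / w * sqrt B' \<le> sqrt b"
  proof -
    have e: "sqrt (\<beta>^2 / w^2 * B') = \<beta> / w * sqrt B'"
      using w b by (simp add: real_sqrt_mult real_sqrt_divide)
    show ?thesis using real_sqrt_le_mono[OF bB] unfolding e .
  qed
  have den: "0 < \<beta> / w * sqrt B'" using b w B' by simp
  have pb: "0 < sqrt b" using den sb by linarith
  have "sqrt a / sqrt b \<le> (sqrt 2 * w * sqrt A') / (\<beta> / w * sqrt B')"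
    by (rule frac_le) (use sa den sb w A' in auto)
  also have "\<dots> = (sqrt 2 * w^2 / \<beta>) * (sqrt A' / sqrt B')"
    using w b B' by (simp add: field_simps power2_eq_square)
  also have "\<dots> \<le> 3 * ((w^2 + \<mu> * sq) / \<mu>) * (sqrt A' / sqrt B')"
  proof (rule mult_right_mono)
    show "0 \<le> sqrt A' / sqrt B'" using A' B' by simp
    have s2: "sqrt 2 \<le> 3 / 2"
    proof -
      have "sqrt 2 \<le> sqrt ((3/2)^2)" by (rule real_sqrt_le_mono) (simp add: power2_eq_square)
      thus ?thesis by simp
    qed
    have i1: "w^2 / \<beta> \<le> w^2 / (2 / 3 * \<mu>)"
      by (rule divide_left_mono) (use bmu mu in auto)
    have "sqrt 2 * w^2 / \<beta> = sqrt 2 * (w^2 / \<beta>)" by simp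
    also have "\<dots> \<le> 3 / 2 * (w^2 / (2 / 3 * \<mu>))"
      by (rule mult_mono) (use s2 i1 b in auto)
    also have "\<dots> = 9 / 4 * (w^2 / \<mu>)" by (simp add: field_simps)
    also have "\<dots> \<le> 3 * (w^2 / \<mu>)" using mu by (intro mult_right_mono) auto
    also have "\<dots> \<le> 3 * ((w^2 + \<mu> * sq) / \<mu>)"
      using mu sq by (intro mult_left_mono divide_right_mono) auto
    finally show "sqrt 2 * w^2 / \<beta> \<le> 3 * ((w^2 + \<mu> * sq) / \<mu>)" .
  qed
  finally show ?thesis using pb by simp
qed

lemma main_bound:
  fixes A Q :: "real mat" and b c x y s :: "real vec" and \<theta> :: real
  assumes A: "A \<in> carrier_mat m n" and Q: "Q \<in> carrier_mat n n" and Qpsd: "psd Q"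
    and mn: "m \<le> n" and d: "det (basis_part A) \<noteq> 0"
    and nb: "neighbourhood A b c Q \<theta> x y s" and th0: "0 < \<theta>" and th1: "\<theta> < 1 / (3 * sqrt (real n))"
  defines "\<mu> \<equiv> (x \<bullet> s) / real n"
    and "\<omega> \<equiv> Max ({x $ i | i. i < n} \<union> {s $ i | i. i < n})"
    and "M \<equiv> four_block_mat (diag_vec s * null_basis A + diag_vec x * Q * null_basis A)
                 (- (diag_vec x * transpose_mat A)) (0\<^sub>m 0 (n - m)) (0\<^sub>m 0 m)"
    and "VAQ \<equiv> four_block_mat (transpose_mat (null_basis A)) (0\<^sub>m (n - m) n) (0\<^sub>m m n) A *
                four_block_mat (1\<^sub>m n) (- Q) (0\<^sub>m n n) (1\<^sub>m n)"
  shows "0 < sigma_min M \<and> cond_num M \<le> 3 * ((\<omega>^2 + \<mu> * sigma_max Q) / \<mu>) * cond_num VAQ"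
proof -
  have dA: "dim_col A = n" using A by simp
  from nb have x: "x \<in> carrier_vec n" and s: "s \<in> carrier_vec n"
    and xp: "\<And>i. i < n \<Longrightarrow> x $ i > 0" and sp: "\<And>i. i < n \<Longrightarrow> s $ i > 0"
    and vn: "vnorm2 (vec n (\<lambda>i. x $ i * s $ i - \<mu>)) \<le> \<theta> * \<mu>"
    unfolding neighbourhood_def Let_def dA \<mu>_def by auto
  have n0: "0 < n"
  proof (rule ccontr)
    assume "\<not> 0 < n" hence "n = 0" by simp
    hence "1 / (3 * sqrt (real n)) = 0" by simp
    with th0 th1 show False by simp
  qed
  have th3: "\<theta> < 1 / 3"
  proof -
    have "1 \<le> sqrt (real n)" using n0 by simp
    hence "1 / (3 * sqrt (real n)) \<le> 1 / 3" by (intro divide_left_mono) auto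
    thus ?thesis using th1 by linarith
  qed
  have xs: "x \<bullet> s = (\<Sum>i\<in>{0..<n}. x $ i * s $ i)" unfolding scalar_prod_def using s by simp
  have "0 < (\<Sum>i\<in>{0..<n}. x $ i * s $ i)"
    by (rule sum_pos) (use n0 xp sp in auto)
  hence mu: "0 < \<mu>" unfolding \<mu>_def xs using n0 by simp
  define \<beta> where "\<beta> = (1 - \<theta>) * \<mu>"
  have bpos: "0 < \<beta>" unfolding \<beta>_def using th3 mu by simp
  have bmu: "2 / 3 * \<mu> \<le> \<beta>"
  proof -
    have "\<mu> * \<theta> \<le> \<mu> * (1 / 3)" using th3 mu by (intro mult_left_mono) auto
    thus ?thesis unfolding \<beta>_def by (simp add: algebra_simps)
  qed
  have hb: "\<beta> \<le> x $ i * s $ i" if i: "i < n" for i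
  proof -
    define D where "D = vec n (\<lambda>i. x $ i * s $ i - \<mu>)"
    have "(D $ i)^2 \<le> (\<Sum>j<n. (D $ j)^2)"
      by (rule member_le_sum[of i "{..<n}" "\<lambda>j. (D $ j)^2", simplified]) (use i in auto)
    hence "\<bar>D $ i\<bar> \<le> sqrt (\<Sum>j<n. (D $ j)^2)" by (intro real_le_rsqrt) simp
    also have "\<dots> = vnorm2 D" unfolding vnorm2_def D_def by simp
    also have "\<dots> \<le> \<theta> * \<mu>" using vn unfolding D_def .
    finally have "\<bar>x $ i * s $ i - \<mu>\<bar> \<le> \<theta> * \<mu>" unfolding D_def using i by simp
    thus ?thesis unfolding \<beta>_def by (simp add: algebra_simps abs_le_iff)
  qed
  define \<Omega> where "\<Omega> = {x $ i | i. i < n} \<union> {s $ i | i. i < n}"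
  have finO: "finite \<Omega>" unfolding \<Omega>_def by (auto intro: finite_image_set)
  have xw: "x $ i \<le> \<omega>" if "i < n" for i
    unfolding \<omega>_def \<Omega>_def[symmetric] by (rule Max_ge[OF finO]) (use that in \<open>auto simp: \<Omega>_def\<close>)
  have sw: "s $ i \<le> \<omega>" if "i < n" for i
    unfolding \<omega>_def \<Omega>_def[symmetric] by (rule Max_ge[OF finO]) (use that in \<open>auto simp: \<Omega>_def\<close>)
  have wpos: "0 < \<omega>" using xw[OF n0] xp[OF n0] by linarith
  have h: "\<forall>i<n. 0 < x $ i \<and> 0 < s $ i \<and> x $ i \<le> \<omega> \<and> s $ i \<le> \<omega> \<and> \<beta> \<le> x $ i * s $ i"
    using xp sp xw sw hb by blast
  have V: "null_basis A \<in> carrier_mat n (n - m)" by (rule null_basis_carrier[OF A mn d])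
  have Xc: "diag_vec x \<in> carrier_mat n n" by (rule diag_vec_carrier[OF x])
  have Sc: "diag_vec s \<in> carrier_mat n n" by (rule diag_vec_carrier[OF s])
  have Mc: "M \<in> carrier_mat n n" unfolding M_def using V Xc Sc Q A mn
    by (auto intro!: carrier_matI)
  have VAQc: "VAQ \<in> carrier_mat n (n + n)" unfolding VAQ_def using V A Q mn
    by (auto intro!: carrier_matI)
  define W where "W = transpose_mat VAQ"
  have Wc: "W \<in> carrier_mat (n + n) n" unfolding W_def using VAQc by simp
  have gM: "gram_mat M = transpose_mat M * M" unfolding gram_mat_def using Mc by simp
  have gV: "gram_mat VAQ = transpose_mat W * W" unfolding gram_mat_def W_def using VAQc n0 by simp
  have gQ: "gram_mat Q = transpose_mat Q * Q" unfolding gram_mat_def using Q by simp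
  define EM where "EM = {k. eigenvalue (transpose_mat M * M) k}"
  define EV where "EV = {k. eigenvalue (transpose_mat W * W) k}"
  define EQ where "EQ = {k. eigenvalue (transpose_mat Q * Q) k}"
  note GM = gram_spec[OF Mc n0, folded EM_def]
  note GV = gram_spec[OF Wc n0, folded EV_def]
  note GQ = gram_spec[OF Q n0, folded EQ_def]
  note SM = sigma_facts[OF Mc n0 gM, folded EM_def]
  note SV = sigma_facts[OF Wc n0 gV, folded EV_def]
  note SQ = sigma_facts[OF Q n0 gQ, folded EQ_def]
  have Wz: "W *\<^sub>v z = transpose_mat (four_block_mat (transpose_mat (null_basis A)) (0\<^sub>m (n - m) n) (0\<^sub>m m n) A *
                four_block_mat (1\<^sub>m n) (- Q) (0\<^sub>m n n) (1\<^sub>m n)) *\<^sub>v z" for z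
    unfolding W_def VAQ_def ..
  note K = key_ineqs[OF A mn d Q Qpsd x s h bpos, folded M_def Wz]
  obtain z1 where z1: "z1 \<in> carrier_vec n" "z1 \<noteq> 0\<^sub>v n" "Max EM * (z1 \<bullet> z1) = (M *\<^sub>v z1) \<bullet> (M *\<^sub>v z1)"
    using GM(6) GM(7) by blast
  have "Max EM * (z1 \<bullet> z1) \<le> 2 * \<omega>^2 * ((W *\<^sub>v z1) \<bullet> (W *\<^sub>v z1))" using z1(3) K(1)[OF z1(1)] by simp
  also have "\<dots> \<le> 2 * \<omega>^2 * (Max EV * (z1 \<bullet> z1))"
    using GV(4) z1(1) by (intro mult_left_mono) auto
  finally have "Max EM * (z1 \<bullet> z1) \<le> (2 * \<omega>^2 * Max EV) * (z1 \<bullet> z1)" by (simp add: mult.assoc)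
  hence aA: "Max EM \<le> 2 * \<omega>^2 * Max EV" using self_scalar_pos[OF z1(1,2)] by simp
  obtain z2 where z2: "z2 \<in> carrier_vec n" "z2 \<noteq> 0\<^sub>v n" "Min EM * (z2 \<bullet> z2) = (M *\<^sub>v z2) \<bullet> (M *\<^sub>v z2)"
    using GM(6) GM(8) by blast
  have "(\<beta>^2 / \<omega>^2 * Min EV) * (z2 \<bullet> z2) = \<beta>^2 / \<omega>^2 * (Min EV * (z2 \<bullet> z2))" by simp
  also have "\<dots> \<le> \<beta>^2 / \<omega>^2 * ((W *\<^sub>v z2) \<bullet> (W *\<^sub>v z2))"
    using GV(5) z2(1) by (intro mult_left_mono) auto
  also have "\<dots> \<le> Min EM * (z2 \<bullet> z2)" using z2(3) K(2)[OF z2(1)] by simp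
  finally have "(\<beta>^2 / \<omega>^2 * Min EV) * (z2 \<bullet> z2) \<le> Min EM * (z2 \<bullet> z2)" .
  hence bB: "\<beta>^2 / \<omega>^2 * Min EV \<le> Min EM"
    by (rule mult_right_le_imp_le) (rule self_scalar_pos[OF z2(1,2)])
  obtain z3 where z3: "z3 \<in> carrier_vec n" "z3 \<noteq> 0\<^sub>v n" "Min EV * (z3 \<bullet> z3) = (W *\<^sub>v z3) \<bullet> (W *\<^sub>v z3)"
    using GV(6) GV(8) by blast
  have "(W *\<^sub>v z3) \<bullet> (W *\<^sub>v z3) > 0"
    by (rule self_scalar_pos[of _ "n + n"]) (use Wc z3 K(3)[OF z3(1,2)] in auto)
  hence "0 < Min EV * (z3 \<bullet> z3)" using z3(3) by simp
  hence B': "0 < Min EV" by (rule zero_less_mult_pos2) (rule self_scalar_pos[OF z3(1,2)])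
  have A': "0 \<le> Max EV" using GV(3) GV(7) by blast
  have a0: "0 \<le> Max EM" using GM(3) GM(7) by blast
  have sq: "0 \<le> sigma_max Q" unfolding SQ(1) using GQ(3) GQ(7) by simp
  have fa: "0 < sqrt (Min EM) \<and> sqrt (Max EM) / sqrt (Min EM)
      \<le> 3 * ((\<omega>^2 + \<mu> * sigma_max Q) / \<mu>) * (sqrt (Max EV) / sqrt (Min EV))"
    by (rule final_arith[OF aA bB B' A' a0 wpos mu bmu sq])
  show ?thesis unfolding cond_num_def SM SV using fa by simp
qed

theorem lemma3:
  "\<exists>C :: real. \<forall>(m::nat) (n::nat) (A::real mat) (b::real vec) (c::real vec) (Q::real mat)
      (x::real vec) (y::real vec) (s::real vec) (\<theta>::real).
     A \<in> carrier_mat m n \<longrightarrow> b \<in> carrier_vec m \<longrightarrow> c \<in> carrier_vec n \<longrightarrow>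
     Q \<in> carrier_mat n n \<longrightarrow> psd Q \<longrightarrow>
     m \<le> n \<longrightarrow> vec_space.rank m A = m \<longrightarrow>
     det (basis_part A) \<noteq> 0 \<longrightarrow>
     neighbourhood A b c Q \<theta> x y s \<longrightarrow>
     0 < \<theta> \<longrightarrow> \<theta> < 1 / (3 * sqrt (real n)) \<longrightarrow>
     \<theta> < 1 / (4 * frob_norm (Q * null_basis A * transpose_mat (null_basis A)) + 1) \<longrightarrow>
     (let V = null_basis A;
          X = diag_vec x; S = diag_vec s;
          \<mu> = (x \<bullet> s) / real n;
          \<omega> = Max ({x $ i | i. i < n} \<union> {s $ i | i. i < n});
          M = four_block_mat (S * V + X * Q * V) (- (X * transpose_mat A)) (0\<^sub>m 0 (n - m)) (0\<^sub>m 0 m);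
          VAQ = four_block_mat (transpose_mat V) (0\<^sub>m (n - m) n) (0\<^sub>m m n) A *
                four_block_mat (1\<^sub>m n) (- Q) (0\<^sub>m n n) (1\<^sub>m n)
      in 0 < sigma_min M \<and>
         cond_num M \<le> C * ((\<omega>^2 + \<mu> * sigma_max Q) / \<mu>) * cond_num VAQ)"
proof (rule exI[of _ 3], intro allI impI)
  fix m n :: nat and A :: "real mat" and b c :: "real vec" and Q :: "real mat"
    and x y s :: "real vec" and \<theta> :: real
  assume A: "A \<in> carrier_mat m n" and "b \<in> carrier_vec m" and "c \<in> carrier_vec n"
    and Q: "Q \<in> carrier_mat n n" and Qp: "psd Q" and mn: "m \<le> n" and "vec_space.rank m A = m"
    and d: "det (basis_part A) \<noteq> 0" and nb: "neighbourhood A b c Q \<theta> x y s"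
    and th0: "0 < \<theta>" and th1: "\<theta> < 1 / (3 * sqrt (real n))"
    and "\<theta> < 1 / (4 * frob_norm (Q * null_basis A * transpose_mat (null_basis A)) + 1)"
  show "let V = null_basis A;
          X = diag_vec x; S = diag_vec s;
          \<mu> = (x \<bullet> s) / real n;
          \<omega> = Max ({x $ i | i. i < n} \<union> {s $ i | i. i < n});
          M = four_block_mat (S * V + X * Q * V) (- (X * transpose_mat A)) (0\<^sub>m 0 (n - m)) (0\<^sub>m 0 m);
          VAQ = four_block_mat (transpose_mat V) (0\<^sub>m (n - m) n) (0\<^sub>m m n) A *
                four_block_mat (1\<^sub>m n) (- Q) (0\<^sub>m n n) (1\<^sub>m n)
      in 0 < sigma_min M \<and>
         cond_num M \<le> 3 * ((\<omega>^2 + \<mu> * sigma_max Q) / \<mu>) * cond_num VAQ"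
    unfolding Let_def by (rule main_bound[OF A Q Qp mn d nb th0 th1])
qed

end
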